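(* Let $\Omega\subset\mathbb R^3$ be a bounded domain containing the origin and $k\ge0$ an integer. Then $$\mathbb P_{k+1}(\Omega; \mathbb T) = (\mathbb P_k(\Omega; \mathbb S)\times\boldsymbol x)\oplus\operatorname{dev}\operatorname{grad}\mathbb P_{k+2}(\Omega; \mathbb R^3),$$ where $\mathbb P_k(\Omega;\mathbb S)\times\boldsymbol x=\{\boldsymbol\tau\times\boldsymbol x:\boldsymbol\tau\in\mathbb P_k(\Omega;\mathbb S)\}$.
   Context: $\mathbb S,\mathbb T$: real symmetric, resp. trace-free, $3\times3$ matrices; $\mathbb P_m(\Omega;X)$: $X$-valued polynomials of total degree $\le m$. $\boldsymbol x$ is the position vector; $\boldsymbol\tau\times\boldsymbol x$ is the matrix whose $i$-th row is (row $i$ of $\boldsymbol\tau$)$\times\boldsymbol x$. $\operatorname{grad}\boldsymbol u=(\partial_ju_i)_{ij}$ and $\operatorname{dev}\boldsymbol A=\boldsymbol A-\frac13\operatorname{tr}(\boldsymbol A)\boldsymbol I$. *)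

theory Defs
  imports "HOL-Analysis.Analysis"
begin

definition poly3 :: "nat \<Rightarrow> (real^3 \<Rightarrow> real) \<Rightarrow> bool" where
  "poly3 m p \<longleftrightarrow> (\<exists>c :: nat \<Rightarrow> nat \<Rightarrow> nat \<Rightarrow> real. \<forall>x.
     p x = (\<Sum>a\<le>m. \<Sum>b\<le>m. \<Sum>d\<le>m.
              if a + b + d \<le> m then c a b d * (x$1)^a * (x$2)^b * (x$3)^d else 0))"

definition vpoly3 :: "nat \<Rightarrow> (real^3 \<Rightarrow> real^3) \<Rightarrow> bool" where
  "vpoly3 m p \<longleftrightarrow> (\<forall>i. poly3 m (\<lambda>x. p x $ i))"

definition mpoly3 :: "nat \<Rightarrow> (real^3 \<Rightarrow> real^3^3) \<Rightarrow> bool" where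
  "mpoly3 m p \<longleftrightarrow> (\<forall>i j. poly3 m (\<lambda>x. p x $ i $ j))"

text \<open>A function on \<Omega> is represented by a function on R^3 that vanishes outside \<Omega>.\<close>
definition on_dom :: "(real^3) set \<Rightarrow> (real^3 \<Rightarrow> 'b::zero) \<Rightarrow> real^3 \<Rightarrow> 'b" where
  "on_dom \<Omega> p = (\<lambda>x. if x \<in> \<Omega> then p x else 0)"

definition PM :: "(real^3) set \<Rightarrow> nat \<Rightarrow> (real^3^3) set \<Rightarrow> (real^3 \<Rightarrow> real^3^3) set" where
  "PM \<Omega> m X = {on_dom \<Omega> p | p. mpoly3 m p \<and> (\<forall>x\<in>\<Omega>. p x \<in> X)}"

definition PV :: "(real^3) set \<Rightarrow> nat \<Rightarrow> (real^3 \<Rightarrow> real^3) set" where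
  "PV \<Omega> m = {on_dom \<Omega> p | p. vpoly3 m p}"

definition symm_mats :: "(real^3^3) set" where
  "symm_mats = {A. transpose A = A}"

definition tracefree_mats :: "(real^3^3) set" where
  "tracefree_mats = {A. trace A = 0}"

definition dev :: "real^3^3 \<Rightarrow> real^3^3" where
  "dev A = A - (trace A / 3) *\<^sub>R mat 1"

text \<open>grad u = (\<partial>_j u_i)_{ij}: the Jacobian matrix.\<close>
definition grad :: "(real^3 \<Rightarrow> real^3) \<Rightarrow> real^3 \<Rightarrow> real^3^3" where
  "grad u x = jacobian u (at x)"

definition cross_x :: "(real^3 \<Rightarrow> real^3^3) \<Rightarrow> real^3 \<Rightarrow> real^3^3" where
  "cross_x \<tau> = (\<lambda>x. \<chi> i. cross3 (\<tau> x $ i) x)"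

definition dev_grad_on :: "(real^3) set \<Rightarrow> (real^3 \<Rightarrow> real^3) \<Rightarrow> real^3 \<Rightarrow> real^3^3" where
  "dev_grad_on \<Omega> u = on_dom \<Omega> (\<lambda>x. dev (grad u x))"

definition is_direct_sum :: "('a \<Rightarrow> 'b::ab_group_add) set \<Rightarrow> ('a \<Rightarrow> 'b) set \<Rightarrow> ('a \<Rightarrow> 'b) set \<Rightarrow> bool" where
  "is_direct_sum V A B \<longleftrightarrow>
     V = {(\<lambda>x. a x + b x) | a b. a \<in> A \<and> b \<in> B} \<and> A \<inter> B = {(\<lambda>x. 0)}"

end

theory Submission
  imports Defs "HOL-Computational_Algebra.Polynomial"
begin

inductive hp :: "nat \<Rightarrow> (real^3 \<Rightarrow> real) \<Rightarrow> bool" where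
  hp_zero: "hp m (\<lambda>x. 0)"
| hp_const: "hp 0 (\<lambda>x. c)"
| hp_mulx: "hp m f \<Longrightarrow> hp (Suc m) (\<lambda>x. x$i * f x)"
| hp_add: "hp m f \<Longrightarrow> hp m g \<Longrightarrow> hp m (\<lambda>x. f x + g x)"
| hp_scale: "hp m f \<Longrightarrow> hp m (\<lambda>x. c * f x)"

lemma hp_sum: "finite A \<Longrightarrow> (\<And>a. a \<in> A \<Longrightarrow> hp m (f a)) \<Longrightarrow> hp m (\<lambda>x. \<Sum>a\<in>A. f a x)"
  by (induction A rule: finite_induct) (auto intro: hp.intros)

lemma hp_diff: "hp m f \<Longrightarrow> hp m g \<Longrightarrow> hp m (\<lambda>x. f x - g x)"
  using hp_add[of m f "\<lambda>x. -1 * g x"] hp_scale[of m g "-1"] by simp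

lemma hp_neg: "hp m f \<Longrightarrow> hp m (\<lambda>x. - f x)"
  using hp_scale[of m f "-1"] by simp

lemma hp_divide: "hp m f \<Longrightarrow> hp m (\<lambda>x. f x / c)"
  using hp_scale[of m f "1/c"] by simp

lemma hp_scale_right: "hp m f \<Longrightarrow> hp m (\<lambda>x. f x * c)"
  using hp_scale[of m f c] by (simp add: mult.commute)

lemma hp_mulx_right: "hp m f \<Longrightarrow> hp (Suc m) (\<lambda>x. f x * x$i)"
  using hp_mulx[of m f i] by (simp add: mult.commute)

lemma hp_if: "hp m f \<Longrightarrow> hp m (\<lambda>x. if P then f x else 0)"
  by (cases P) (auto intro: hp.intros)

lemma hp_pow: "hp m f \<Longrightarrow> hp (m + a) (\<lambda>x. x$i ^ a * f x)"
proof (induction a)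
  case 0 then show ?case by simp
next
  case (Suc a)
  from hp_mulx[OF Suc.IH[OF Suc.prems], of i] show ?case by (simp add: mult.assoc)
qed

lemma hp_homog: "hp m f \<Longrightarrow> f (t *\<^sub>R x) = t ^ m * f x"
  by (induction rule: hp.induct) (auto simp: algebra_simps)

definition D :: "3 \<Rightarrow> (real^3 \<Rightarrow> real) \<Rightarrow> real^3 \<Rightarrow> real" where
  "D j f x = frechet_derivative f (at x) (axis j 1)"

definition Df :: "(real^3 \<Rightarrow> real) \<Rightarrow> bool" where
  "Df f \<longleftrightarrow> (\<forall>x. (f has_derivative (\<lambda>h. \<Sum>j\<in>UNIV. h$j * D j f x)) (at x))"

lemma sum_axis: "(\<Sum>l\<in>UNIV. axis j (1::real) $ l * g l) = g j"
proof -
  have "\<And>l. axis j (1::real) $ l * g l = (if l = j then g l else 0)" by (simp add: axis_def)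
  then show ?thesis by simp
qed

lemma D_eq: "(f has_derivative (\<lambda>h. \<Sum>j\<in>UNIV. h$j * g j)) (at x) \<Longrightarrow> D j f x = g j"
  unfolding D_def by (drule frechet_derivative_at) (metis sum_axis)

lemma Df_intro:
  assumes "\<And>x. (f has_derivative (\<lambda>h. \<Sum>j\<in>UNIV. h$j * g j x)) (at x)"
  shows "Df f" "D j f x = g j x"
proof -
  have e: "\<And>x j. D j f x = g j x" using D_eq[OF assms] by blast
  show "Df f" unfolding Df_def e using assms by simp
  show "D j f x = g j x" by (rule e)
qed

lemma Df_D: "Df f \<Longrightarrow> (f has_derivative (\<lambda>h. \<Sum>j\<in>UNIV. h$j * D j f x)) (at x)"
  unfolding Df_def by blast

lemma hd_coord: "((\<lambda>x::real^3. x$i) has_derivative (\<lambda>h. \<Sum>j\<in>UNIV. h$j * (if j = i then 1 else 0))) (at x)"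
proof -
  have "(\<lambda>h::real^3. \<Sum>j\<in>UNIV. h$j * (if j = i then 1 else 0)) = (\<lambda>h. h$i)"
    by (simp add: if_distrib cong: if_cong)
  then show ?thesis using bounded_linear.has_derivative[OF bounded_linear_vec_nth[of i], OF has_derivative_ident]
    by simp
qed

lemma hd_const: "((\<lambda>x::real^3. c::real) has_derivative (\<lambda>h. \<Sum>j\<in>UNIV. h$j * 0)) (at x)"
  by (simp add: has_derivative_const)

lemma sum_if_mult: "(\<Sum>j\<in>UNIV. (h::real^3)$j * ((if j = i then 1 else 0) * c)) = h$i * c"
proof -
  have "\<And>j. h$j * ((if j = i then 1 else 0) * c) = (if j = i then h$i * c else 0)" by simp
  then show ?thesis by simp
qed

lemma hd_add:
  fixes f g :: "real^3 \<Rightarrow> real"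
  shows "(f has_derivative (\<lambda>h. \<Sum>j\<in>UNIV. h$j * a j)) F \<Longrightarrow> (g has_derivative (\<lambda>h. \<Sum>j\<in>UNIV. h$j * b j)) F
  \<Longrightarrow> ((\<lambda>x. f x + g x) has_derivative (\<lambda>h. \<Sum>j\<in>UNIV. h$j * (a j + b j))) F"
  by (rule has_derivative_eq_rhs, rule has_derivative_add, assumption, assumption)
     (simp add: fun_eq_iff algebra_simps sum.distrib)

lemma hd_scale:
  fixes f :: "real^3 \<Rightarrow> real"
  shows "(f has_derivative (\<lambda>h. \<Sum>j\<in>UNIV. h$j * a j)) F
  \<Longrightarrow> ((\<lambda>x. c * f x) has_derivative (\<lambda>h. \<Sum>j\<in>UNIV. h$j * (c * a j))) F"
  by (rule has_derivative_eq_rhs, rule has_derivative_mult_right, assumption)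
     (simp add: fun_eq_iff algebra_simps sum_distrib_left)

lemma hd_mul:
  fixes f g :: "real^3 \<Rightarrow> real"
  shows "(f has_derivative (\<lambda>h. \<Sum>j\<in>UNIV. h$j * a j)) (at x) \<Longrightarrow> (g has_derivative (\<lambda>h. \<Sum>j\<in>UNIV. h$j * b j)) (at x)
  \<Longrightarrow> ((\<lambda>x. f x * g x) has_derivative (\<lambda>h. \<Sum>j\<in>UNIV. h$j * (f x * b j + a j * g x))) (at x)"
  by (rule has_derivative_eq_rhs, rule has_derivative_mult, assumption, assumption)
     (simp add: fun_eq_iff algebra_simps sum.distrib sum_distrib_left sum_distrib_right)

lemma hp_D_all: "hp m f \<Longrightarrow> Df f \<and> (\<forall>j. hp (m - 1) (D j f)) \<and> (m = 0 \<longrightarrow> (\<forall>j x. D j f x = 0))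
   \<and> (\<forall>x. (\<Sum>j\<in>UNIV. x$j * D j f x) = real m * f x)"
proof (induction rule: hp.induct)
  case (hp_zero m)
  have h: "\<And>x. ((\<lambda>x::real^3. 0::real) has_derivative (\<lambda>h. \<Sum>j\<in>UNIV. h$j * (\<lambda>j x. 0) j x)) (at x)"
    using hd_const by simp
  show ?case using Df_intro[OF h] by (auto intro: hp.intros)
next
  case (hp_const c)
  have h: "\<And>x. ((\<lambda>x::real^3. c) has_derivative (\<lambda>h. \<Sum>j\<in>UNIV. h$j * (\<lambda>j x. 0) j x)) (at x)"
    using hd_const by simp
  show ?case using Df_intro[OF h] by (auto intro: hp.intros)
next
  case (hp_mulx m f i)
  have h: "\<And>x. ((\<lambda>x. x$i * f x) has_derivative (\<lambda>h. \<Sum>j\<in>UNIV. h$j *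
      (\<lambda>j x. x$i * D j f x + (if j = i then 1 else 0) * f x) j x)) (at x)"
    using hd_mul[OF hd_coord Df_D[of f]] hp_mulx.IH by auto
  note DD = Df_intro[OF h]
  have "hp m (D j (\<lambda>x. x$i * f x))" for j
  proof -
    have a: "hp m (\<lambda>x. x$i * D j f x)"
    proof (cases m)
      case 0 then show ?thesis using hp_mulx.IH by (auto intro: hp.intros)
    next
      case (Suc n) then show ?thesis using hp_mulx.IH hp.hp_mulx[of n "D j f" i] by auto
    qed
    have b: "hp m (\<lambda>x. (if j = i then 1 else 0) * f x)"
      using hp_mulx.hyps by (auto intro: hp.intros)
    show ?thesis unfolding DD(2)[abs_def] by (rule hp_add[OF a b])
  qed
  moreover have "(\<Sum>j\<in>UNIV. x$j * D j (\<lambda>x. x$i * f x) x) = real (Suc m) * (x$i * f x)" for x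
  proof -
    have "(\<Sum>j\<in>UNIV. x$j * D j (\<lambda>x. x$i * f x) x) = x$i * (\<Sum>j\<in>UNIV. x$j * D j f x) + x$i * f x"
      unfolding DD(2) by (simp add: distrib_left sum.distrib sum_distrib_left sum_if_mult mult.left_commute)
    then show ?thesis using hp_mulx.IH by (simp add: algebra_simps)
  qed
  ultimately show ?case using DD(1) by simp
next
  case (hp_add m f g)
  have h: "\<And>x. ((\<lambda>x. f x + g x) has_derivative (\<lambda>h. \<Sum>j\<in>UNIV. h$j *
      (\<lambda>j x. D j f x + D j g x) j x)) (at x)"
    using hd_add[OF Df_D[of f] Df_D[of g]] hp_add.IH by auto
  note DD = Df_intro[OF h]
  show ?case using DD hp_add.IH
    by (auto simp: algebra_simps sum.distrib intro!: hp.intros)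
next
  case (hp_scale m f c)
  have h: "\<And>x. ((\<lambda>x. c * f x) has_derivative (\<lambda>h. \<Sum>j\<in>UNIV. h$j *
      (\<lambda>j x. c * D j f x) j x)) (at x)"
    using hd_scale[OF Df_D[of f]] hp_scale.IH by auto
  note DD = Df_intro[OF h]
  show ?case using DD hp_scale.IH
    by (auto simp: algebra_simps sum_distrib_left[symmetric] intro!: hp.intros)
qed

definition mono3 :: "nat \<Rightarrow> nat \<Rightarrow> nat \<Rightarrow> real^3 \<Rightarrow> real" where
  "mono3 a b d x = (x$1)^a * (x$2)^b * (x$3)^d"

lemma poly3_alt: "poly3 m p \<longleftrightarrow> (\<exists>c. \<forall>x. p x = (\<Sum>a\<le>m. \<Sum>b\<le>m. \<Sum>d\<le>m.
              if a + b + d \<le> m then c a b d * mono3 a b d x else 0))"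
  unfolding poly3_def mono3_def by (simp only: mult.assoc)

lemma poly3_zero: "poly3 m (\<lambda>x. 0)"
  unfolding poly3_alt
  apply (rule exI[of _ "\<lambda>a b d. 0::real"])
  apply (simp only: mult_zero_left if_cancel sum.neutral_const)
  apply simp
  done

lemma poly3_add: "poly3 m f \<Longrightarrow> poly3 m g \<Longrightarrow> poly3 m (\<lambda>x. f x + g x)"
  unfolding poly3_alt
proof (elim exE)
  fix c c' assume f: "\<forall>x. f x = (\<Sum>a\<le>m. \<Sum>b\<le>m. \<Sum>d\<le>m. if a + b + d \<le> m then c a b d * mono3 a b d x else 0)"
    and g: "\<forall>x. g x = (\<Sum>a\<le>m. \<Sum>b\<le>m. \<Sum>d\<le>m. if a + b + d \<le> m then c' a b d * mono3 a b d x else 0)"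
  show "\<exists>c. \<forall>x. f x + g x = (\<Sum>a\<le>m. \<Sum>b\<le>m. \<Sum>d\<le>m. if a + b + d \<le> m then c a b d * mono3 a b d x else 0)"
    by (rule exI[of _ "\<lambda>a b d. c a b d + c' a b d"])
       (simp add: f g sum.distrib[symmetric] distrib_right if_distrib cong: if_cong)
qed

lemma poly3_scale: "poly3 m f \<Longrightarrow> poly3 m (\<lambda>x. k * f x)"
  unfolding poly3_alt
proof (elim exE)
  fix c assume f: "\<forall>x. f x = (\<Sum>a\<le>m. \<Sum>b\<le>m. \<Sum>d\<le>m. if a + b + d \<le> m then c a b d * mono3 a b d x else 0)"
  show "\<exists>c. \<forall>x. k * f x = (\<Sum>a\<le>m. \<Sum>b\<le>m. \<Sum>d\<le>m. if a + b + d \<le> m then c a b d * mono3 a b d x else 0)"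
    by (rule exI[of _ "\<lambda>a b d. k * c a b d"])
       (simp add: f sum_distrib_left if_distrib mult.assoc cong: if_cong)
qed

lemma poly3_sum: "finite A \<Longrightarrow> (\<And>a. a \<in> A \<Longrightarrow> poly3 m (f a)) \<Longrightarrow> poly3 m (\<lambda>x. \<Sum>a\<in>A. f a x)"
  by (induction A rule: finite_induct) (auto intro: poly3_zero poly3_add)

lemma poly3_diff: "poly3 m f \<Longrightarrow> poly3 m g \<Longrightarrow> poly3 m (\<lambda>x. f x - g x)"
  using poly3_add[of m f "\<lambda>x. -1 * g x"] poly3_scale[of m g "-1"] by simp

definition hpc :: "nat \<Rightarrow> (real^3 \<Rightarrow> real) \<Rightarrow> bool" where
  "hpc m f \<longleftrightarrow> (\<exists>c. (\<forall>a b d. c a b d \<noteq> 0 \<longrightarrow> a + b + d = m) \<and>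
     (\<forall>A B E x. m \<le> A \<longrightarrow> m \<le> B \<longrightarrow> m \<le> E \<longrightarrow>
        f x = (\<Sum>a\<le>A. \<Sum>b\<le>B. \<Sum>d\<le>E. c a b d * mono3 a b d x)))"

lemma sum_shift0: "(\<Sum>a\<le>Suc A. (if a = 0 then 0 else g (a - 1) * y ^ a)) = y * (\<Sum>a\<le>A. g a * y ^ a)"
  for y :: real
  by (simp add: sum.atMost_Suc_shift sum_distrib_left algebra_simps del: sum.atMost_Suc)

lemma shift_supp: "\<forall>a b d. c a b d \<noteq> 0 \<longrightarrow> a + b + d = m \<Longrightarrow> 0 < a \<Longrightarrow> c (a - Suc 0) b d \<noteq> 0 \<Longrightarrow> a + b + d = Suc m"
proof -
  assume "\<forall>a b d. c a b d \<noteq> 0 \<longrightarrow> a + b + d = m" "0 < a" "c (a - Suc 0) b d \<noteq> 0"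
  then have "a - Suc 0 + b + d = m" by blast
  then show ?thesis using \<open>0 < a\<close> by arith
qed

lemma shift_supp2: "\<forall>a b d. c a b d \<noteq> 0 \<longrightarrow> a + b + d = m \<Longrightarrow> 0 < b \<Longrightarrow> c a (b - Suc 0) d \<noteq> 0 \<Longrightarrow> a + b + d = Suc m"
proof -
  assume "\<forall>a b d. c a b d \<noteq> 0 \<longrightarrow> a + b + d = m" "0 < b" "c a (b - Suc 0) d \<noteq> 0"
  then have "a + (b - Suc 0) + d = m" by blast
  then show ?thesis using \<open>0 < b\<close> by arith
qed

lemma shift_supp3: "\<forall>a b d. c a b d \<noteq> 0 \<longrightarrow> a + b + d = m \<Longrightarrow> 0 < d \<Longrightarrow> c a b (d - Suc 0) \<noteq> 0 \<Longrightarrow> a + b + d = Suc m"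
proof -
  assume "\<forall>a b d. c a b d \<noteq> 0 \<longrightarrow> a + b + d = m" "0 < d" "c a b (d - Suc 0) \<noteq> 0"
  then have "a + b + (d - Suc 0) = m" by blast
  then show ?thesis using \<open>0 < d\<close> by arith
qed

lemma hp_hpc: "hp m f \<Longrightarrow> hpc m f"
proof (induction rule: hp.induct)
  case (hp_zero m)
  show ?case unfolding hpc_def by (rule exI[of _ "\<lambda>a b d. 0"]) simp
next
  case (hp_const k)
  show ?case unfolding hpc_def
  proof (rule exI[of _ "\<lambda>a b d. if a = 0 \<and> b = 0 \<and> d = 0 then k else 0"], intro conjI allI impI)
    fix A B E x
    have "(\<Sum>a\<le>A. \<Sum>b\<le>B. \<Sum>d\<le>E. (if a = 0 \<and> b = 0 \<and> d = 0 then k else 0) * mono3 a b d x)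
        = (\<Sum>a\<le>A. \<Sum>b\<le>B. \<Sum>d\<le>E. if d = 0 then (if b = 0 then (if a = 0 then k else 0) else 0) else 0)"
      by (intro sum.cong refl) (auto simp: mono3_def)
    also have "\<dots> = k" by simp
    finally show "k = (\<Sum>a\<le>A. \<Sum>b\<le>B. \<Sum>d\<le>E. (if a = 0 \<and> b = 0 \<and> d = 0 then k else 0) * mono3 a b d x)"
      by simp
  qed (auto split: if_splits)
next
  case (hp_mulx m f i)
  from hp_mulx.IH obtain c where c0: "\<forall>a b d. c a b d \<noteq> 0 \<longrightarrow> a + b + d = m"
    and cf: "\<forall>A B E x. m \<le> A \<longrightarrow> m \<le> B \<longrightarrow> m \<le> E \<longrightarrow>
        f x = (\<Sum>a\<le>A. \<Sum>b\<le>B. \<Sum>d\<le>E. c a b d * mono3 a b d x)"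
    unfolding hpc_def by blast
  consider "i = 1" | "i = 2" | "i = 3" using exhaust_3 by blast
  then show ?case
  proof cases
    case 1
    show ?thesis unfolding hpc_def
    proof (rule exI[of _ "\<lambda>a b d. if a = 0 then 0 else c (a - 1) b d"], intro conjI allI impI)
      fix A B E x assume h: "Suc m \<le> A" "Suc m \<le> B" "Suc m \<le> E"
      then obtain A' where A': "A = Suc A'" "m \<le> A'" by (cases A) auto
      have "(\<Sum>a\<le>A. \<Sum>b\<le>B. \<Sum>d\<le>E. (if a = 0 then 0 else c (a - 1) b d) * mono3 a b d x)
          = (\<Sum>a\<le>Suc A'. (if a = 0 then 0 else (\<Sum>b\<le>B. \<Sum>d\<le>E. c (a - 1) b d * mono3 0 b d x) * (x$1) ^ a))"
        unfolding A' by (intro sum.cong refl) (simp add: mono3_def sum_distrib_left sum_distrib_right algebra_simps)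
      also have "\<dots> = x$1 * (\<Sum>a\<le>A'. (\<Sum>b\<le>B. \<Sum>d\<le>E. c a b d * mono3 0 b d x) * (x$1) ^ a)"
        by (rule sum_shift0)
      also have "\<dots> = x$1 * f x"
        using cf[rule_format, of A' B E x] A' h by (simp add: mono3_def sum_distrib_left sum_distrib_right algebra_simps)
      finally show "x $ i * f x = (\<Sum>a\<le>A. \<Sum>b\<le>B. \<Sum>d\<le>E. (if a = 0 then 0 else c (a - 1) b d) * mono3 a b d x)"
        using 1 by simp
    qed (use c0 in \<open>auto split: if_splits intro: shift_supp[OF c0]\<close>)
  next
    case 2
    show ?thesis unfolding hpc_def
    proof (rule exI[of _ "\<lambda>a b d. if b = 0 then 0 else c a (b - 1) d"], intro conjI allI impI)
      fix A B E x assume h: "Suc m \<le> A" "Suc m \<le> B" "Suc m \<le> E"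
      then obtain B' where B': "B = Suc B'" "m \<le> B'" by (cases B) auto
      have "(\<Sum>a\<le>A. \<Sum>b\<le>B. \<Sum>d\<le>E. (if b = 0 then 0 else c a (b - 1) d) * mono3 a b d x)
          = (\<Sum>a\<le>A. \<Sum>b\<le>Suc B'. (if b = 0 then 0 else (\<Sum>d\<le>E. c a (b - 1) d * mono3 a 0 d x) * (x$2) ^ b))"
        unfolding B' by (intro sum.cong refl) (simp add: mono3_def sum_distrib_left sum_distrib_right algebra_simps)
      also have "\<dots> = (\<Sum>a\<le>A. x$2 * (\<Sum>b\<le>B'. (\<Sum>d\<le>E. c a b d * mono3 a 0 d x) * (x$2) ^ b))"
        by (rule sum.cong[OF refl], rule sum_shift0)
      also have "\<dots> = x$2 * f x"
        using cf[rule_format, of A B' E x] B' h by (simp add: mono3_def sum_distrib_left sum_distrib_right algebra_simps)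
      finally show "x $ i * f x = (\<Sum>a\<le>A. \<Sum>b\<le>B. \<Sum>d\<le>E. (if b = 0 then 0 else c a (b - 1) d) * mono3 a b d x)"
        using 2 by simp
    qed (use c0 in \<open>auto split: if_splits intro: shift_supp2[OF c0]\<close>)
  next
    case 3
    show ?thesis unfolding hpc_def
    proof (rule exI[of _ "\<lambda>a b d. if d = 0 then 0 else c a b (d - 1)"], intro conjI allI impI)
      fix A B E x assume h: "Suc m \<le> A" "Suc m \<le> B" "Suc m \<le> E"
      then obtain E' where E': "E = Suc E'" "m \<le> E'" by (cases E) auto
      have "(\<Sum>a\<le>A. \<Sum>b\<le>B. \<Sum>d\<le>E. (if d = 0 then 0 else c a b (d - 1)) * mono3 a b d x)
          = (\<Sum>a\<le>A. \<Sum>b\<le>B. \<Sum>d\<le>Suc E'. (if d = 0 then 0 else (c a b (d - 1) * mono3 a b 0 x) * (x$3) ^ d))"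
        unfolding E' by (intro sum.cong refl) (simp add: mono3_def algebra_simps)
      also have "\<dots> = (\<Sum>a\<le>A. \<Sum>b\<le>B. x$3 * (\<Sum>d\<le>E'. (c a b d * mono3 a b 0 x) * (x$3) ^ d))"
        by (rule sum.cong[OF refl], rule sum.cong[OF refl], rule sum_shift0)
      also have "\<dots> = x$3 * f x"
        using cf[rule_format, of A B E' x] E' h by (simp add: mono3_def sum_distrib_left sum_distrib_right algebra_simps)
      finally show "x $ i * f x = (\<Sum>a\<le>A. \<Sum>b\<le>B. \<Sum>d\<le>E. (if d = 0 then 0 else c a b (d - 1)) * mono3 a b d x)"
        using 3 by simp
    qed (use c0 in \<open>auto split: if_splits intro: shift_supp3[OF c0]\<close>)
  qed
next
  case (hp_add m f g)
  from hp_add.IH obtain c c' where c0: "\<forall>a b d. c a b d \<noteq> 0 \<longrightarrow> a + b + d = m"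
    and cf: "\<forall>A B E x. m \<le> A \<longrightarrow> m \<le> B \<longrightarrow> m \<le> E \<longrightarrow>
        f x = (\<Sum>a\<le>A. \<Sum>b\<le>B. \<Sum>d\<le>E. c a b d * mono3 a b d x)"
    and c0': "\<forall>a b d. c' a b d \<noteq> 0 \<longrightarrow> a + b + d = m"
    and cg: "\<forall>A B E x. m \<le> A \<longrightarrow> m \<le> B \<longrightarrow> m \<le> E \<longrightarrow>
        g x = (\<Sum>a\<le>A. \<Sum>b\<le>B. \<Sum>d\<le>E. c' a b d * mono3 a b d x)"
    unfolding hpc_def by blast
  show ?case unfolding hpc_def
  proof (rule exI[of _ "\<lambda>a b d. c a b d + c' a b d"], intro conjI allI impI)
    fix a b d assume "c a b d + c' a b d \<noteq> 0"
    then have "c a b d \<noteq> 0 \<or> c' a b d \<noteq> 0" by auto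
    then show "a + b + d = m" using c0 c0' by blast
  next
    fix A B E x assume h: "m \<le> A" "m \<le> B" "m \<le> E"
    have "f x = (\<Sum>a\<le>A. \<Sum>b\<le>B. \<Sum>d\<le>E. c a b d * mono3 a b d x)" using cf h by blast
    moreover have "g x = (\<Sum>a\<le>A. \<Sum>b\<le>B. \<Sum>d\<le>E. c' a b d * mono3 a b d x)" using cg h by blast
    ultimately show "f x + g x = (\<Sum>a\<le>A. \<Sum>b\<le>B. \<Sum>d\<le>E. (c a b d + c' a b d) * mono3 a b d x)"
      by (simp add: distrib_right sum.distrib)
  qed
next
  case (hp_scale m f k)
  from hp_scale.IH obtain c where c0: "\<forall>a b d. c a b d \<noteq> 0 \<longrightarrow> a + b + d = m"
    and cf: "\<forall>A B E x. m \<le> A \<longrightarrow> m \<le> B \<longrightarrow> m \<le> E \<longrightarrow>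
        f x = (\<Sum>a\<le>A. \<Sum>b\<le>B. \<Sum>d\<le>E. c a b d * mono3 a b d x)"
    unfolding hpc_def by blast
  show ?case unfolding hpc_def
  proof (rule exI[of _ "\<lambda>a b d. k * c a b d"], intro conjI allI impI)
    fix a b d assume "k * c a b d \<noteq> 0"
    then have "c a b d \<noteq> 0" by auto
    then show "a + b + d = m" using c0 by blast
  next
    fix A B E x assume h: "m \<le> A" "m \<le> B" "m \<le> E"
    have "f x = (\<Sum>a\<le>A. \<Sum>b\<le>B. \<Sum>d\<le>E. c a b d * mono3 a b d x)" using cf h by blast
    then show "k * f x = (\<Sum>a\<le>A. \<Sum>b\<le>B. \<Sum>d\<le>E. (k * c a b d) * mono3 a b d x)"
      by (simp add: sum_distrib_left mult.assoc)
  qed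
qed

lemma hp_poly3: "hp m f \<Longrightarrow> m \<le> n \<Longrightarrow> poly3 n f"
proof -
  assume "hp m f" "m \<le> n"
  then obtain c where c0: "\<forall>a b d. c a b d \<noteq> 0 \<longrightarrow> a + b + d = m"
    and cf: "\<forall>A B E x. m \<le> A \<longrightarrow> m \<le> B \<longrightarrow> m \<le> E \<longrightarrow>
        f x = (\<Sum>a\<le>A. \<Sum>b\<le>B. \<Sum>d\<le>E. c a b d * mono3 a b d x)"
    using hp_hpc unfolding hpc_def by blast
  show "poly3 n f" unfolding poly3_alt
  proof (rule exI[of _ c], intro allI)
    fix x
    have "f x = (\<Sum>a\<le>n. \<Sum>b\<le>n. \<Sum>d\<le>n. c a b d * mono3 a b d x)" using cf \<open>m \<le> n\<close> by blast
    also have "\<dots> = (\<Sum>a\<le>n. \<Sum>b\<le>n. \<Sum>d\<le>n. if a + b + d \<le> n then c a b d * mono3 a b d x else 0)"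
      using c0 \<open>m \<le> n\<close> by (intro sum.cong refl) auto
    finally show "f x = \<dots>" .
  qed
qed

lemma hp_if2: "(P \<Longrightarrow> hp m f) \<Longrightarrow> hp m (\<lambda>x. if P then f x else 0)"
  by (cases P) (auto intro: hp.intros)

lemma hp_mono3: "hp (a + b + d) (\<lambda>x. k * mono3 a b d x)"
proof -
  have "hp (0 + a) (\<lambda>x. x$1 ^ a * k)" by (rule hp_pow) (rule hp_const)
  then have "hp (0 + a + b) (\<lambda>x. x$2 ^ b * (x$1 ^ a * k))" by (rule hp_pow)
  then have "hp (0 + a + b + d) (\<lambda>x. x$3 ^ d * (x$2 ^ b * (x$1 ^ a * k)))" by (rule hp_pow)
  then show ?thesis by (simp add: mono3_def algebra_simps)
qed

lemma sum_if_le: "(\<Sum>m\<le>n. if (s::nat) = m then t else 0) = (if s \<le> n then t else (0::real))"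
  by simp

lemma poly3_decomp: "poly3 n f \<Longrightarrow> \<exists>g. (\<forall>m. hp m (g m)) \<and> (\<forall>x. f x = (\<Sum>m\<le>n. g m x))"
proof -
  assume "poly3 n f"
  then obtain c where cf: "\<forall>x. f x = (\<Sum>a\<le>n. \<Sum>b\<le>n. \<Sum>d\<le>n.
              if a + b + d \<le> n then c a b d * mono3 a b d x else 0)" unfolding poly3_alt by blast
  define g where "g m x = (\<Sum>a\<le>n. \<Sum>b\<le>n. \<Sum>d\<le>n. if a + b + d = m then c a b d * mono3 a b d x else 0)" for m x
  have "hp m (g m)" for m
    unfolding g_def
    by (intro hp_sum finite_atMost hp_if2) (use hp_mono3 in auto)
  moreover have "f x = (\<Sum>m\<le>n. g m x)" for x
  proof -
    have "f x = (\<Sum>a\<le>n. \<Sum>b\<le>n. \<Sum>d\<le>n. \<Sum>m\<le>n. if a + b + d = m then c a b d * mono3 a b d x else 0)"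
      using cf by (simp only: sum_if_le)
    also have "\<dots> = (\<Sum>a\<le>n. \<Sum>b\<le>n. \<Sum>m\<le>n. \<Sum>d\<le>n. if a + b + d = m then c a b d * mono3 a b d x else 0)"
      by (rule sum.cong[OF refl], rule sum.cong[OF refl], rule sum.swap)
    also have "\<dots> = (\<Sum>a\<le>n. \<Sum>m\<le>n. \<Sum>b\<le>n. \<Sum>d\<le>n. if a + b + d = m then c a b d * mono3 a b d x else 0)"
      by (rule sum.cong[OF refl], rule sum.swap)
    also have "\<dots> = (\<Sum>m\<le>n. \<Sum>a\<le>n. \<Sum>b\<le>n. \<Sum>d\<le>n. if a + b + d = m then c a b d * mono3 a b d x else 0)"
      by (rule sum.swap)
    finally show ?thesis unfolding g_def .
  qed
  ultimately show ?thesis by blast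
qed

lemma hp_Df: "hp m f \<Longrightarrow> Df f" using hp_D_all by blast
lemma hp_D: "hp m f \<Longrightarrow> hp (m - 1) (D j f)" using hp_D_all by blast
lemma hp_D': "hp m f \<Longrightarrow> hp (m - Suc 0) (D j f)" using hp_D_all by simp
lemma hp_D0: "hp 0 f \<Longrightarrow> D j f x = 0" using hp_D_all by blast
lemma hp_euler: "hp m f \<Longrightarrow> (\<Sum>j\<in>UNIV. x$j * D j f x) = real m * f x" using hp_D_all by blast

lemma hp_euler3: "hp m f \<Longrightarrow> x$1 * D 1 f x + x$2 * D 2 f x + x$3 * D 3 f x = real m * f x"
  using hp_euler[of m f x] by (simp add: sum_3)

lemma Df_const: "Df (\<lambda>x. c)" "D j (\<lambda>x. c) x = 0"
proof -
  have h: "\<And>x. ((\<lambda>x::real^3. c) has_derivative (\<lambda>h. \<Sum>j\<in>UNIV. h$j * (\<lambda>j x. 0) j x)) (at x)"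
    using hd_const by simp
  show "Df (\<lambda>x. c)" by (rule Df_intro(1)[OF h])
  show "D j (\<lambda>x. c) x = 0" using Df_intro(2)[OF h] by simp
qed

lemma Df_add: assumes "Df f" "Df g"
  shows "Df (\<lambda>x. f x + g x)" "D j (\<lambda>x. f x + g x) x = D j f x + D j g x"
  using Df_intro[of "\<lambda>x. f x + g x" "\<lambda>j x. D j f x + D j g x", OF hd_add[OF Df_D[OF assms(1)] Df_D[OF assms(2)]]]
  by auto

lemma Df_scale: assumes "Df f"
  shows "Df (\<lambda>x. c * f x)" "D j (\<lambda>x. c * f x) x = c * D j f x"
  using Df_intro[of "\<lambda>x. c * f x" "\<lambda>j x. c * D j f x", OF hd_scale[OF Df_D[OF assms(1)]]]
  by auto

lemma Df_mul: assumes "Df f" "Df g"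
  shows "Df (\<lambda>x. f x * g x)" "D j (\<lambda>x. f x * g x) x = f x * D j g x + D j f x * g x"
  using Df_intro[of "\<lambda>x. f x * g x" "\<lambda>j x. f x * D j g x + D j f x * g x", OF hd_mul[OF Df_D[OF assms(1)] Df_D[OF assms(2)]]]
  by auto

lemma Df_coord: "Df (\<lambda>x. x$i)" "D j (\<lambda>x. x$i) x = (if j = i then 1 else 0)"
  using Df_intro[of "\<lambda>x. x$i" "\<lambda>j x. if j = i then 1 else 0", OF hd_coord] by auto

lemma Df_diff: assumes "Df f" "Df g"
  shows "Df (\<lambda>x. f x - g x)" "D j (\<lambda>x. f x - g x) x = D j f x - D j g x"
proof -
  have e: "(\<lambda>x. f x - g x) = (\<lambda>x. f x + (-1) * g x)" by auto
  show "Df (\<lambda>x. f x - g x)" unfolding e by (intro Df_add Df_scale assms)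
  show "D j (\<lambda>x. f x - g x) x = D j f x - D j g x"
  proof -
    have 1: "D j (\<lambda>x. f x + (-1) * g x) x = D j f x + D j (\<lambda>x. (-1) * g x) x"
      by (rule Df_add(2)[OF assms(1) Df_scale(1)[OF assms(2)]])
    have 2: "D j (\<lambda>x. (-1) * g x) x = (-1) * D j g x" by (rule Df_scale(2)[OF assms(2)])
    show ?thesis unfolding e 1 2 by simp
  qed
qed

lemma Df_sum: assumes "finite A" "\<And>a. a \<in> A \<Longrightarrow> Df (f a)"
  shows "Df (\<lambda>x. \<Sum>a\<in>A. f a x) \<and> D j (\<lambda>x. \<Sum>a\<in>A. f a x) x = (\<Sum>a\<in>A. D j (f a) x)"
  using assms
proof (induction A arbitrary: x rule: finite_induct)
  case empty then show ?case using Df_const[where c=0] by simp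
next
  case (insert a A)
  then have "Df (f a)" "Df (\<lambda>x. \<Sum>a\<in>A. f a x)" by auto
  then show ?case using insert Df_add[of "f a" "\<lambda>x. \<Sum>a\<in>A. f a x"] by simp
qed

lemma Df_cong: "(\<And>x. f x = g x) \<Longrightarrow> Df f \<Longrightarrow> Df g \<and> D j g x = D j f x"
proof -
  assume "\<And>x. f x = g x" "Df f"
  then have "f = g" by auto
  then show ?thesis using \<open>Df f\<close> by simp
qed

lemma poly3_Df: "poly3 n f \<Longrightarrow> Df f"
proof -
  assume "poly3 n f"
  then obtain g where g: "\<forall>m. hp m (g m)" "\<forall>x. f x = (\<Sum>m\<le>n. g m x)" using poly3_decomp by blast
  have dg: "\<And>a. Df (g a)" using g hp_Df by blast
  have "Df (\<lambda>x. \<Sum>m\<le>n. g m x)" using Df_sum[of "{..n}" g, OF finite_atMost dg] by blast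
  moreover have "(\<lambda>x. \<Sum>m\<le>n. g m x) = f" using g by auto
  ultimately show ?thesis by simp
qed

lemma poly3_D: "poly3 n f \<Longrightarrow> poly3 (n - 1) (D j f)"
proof -
  assume "poly3 n f"
  then obtain g where g: "\<forall>m. hp m (g m)" "\<forall>x. f x = (\<Sum>m\<le>n. g m x)" using poly3_decomp by blast
  have fe: "f = (\<lambda>x. \<Sum>m\<le>n. g m x)" using g by auto
  have dg: "\<And>a. Df (g a)" using g hp_Df by blast
  have "D j f = (\<lambda>x. \<Sum>m\<le>n. D j (g m) x)"
    unfolding fe using Df_sum[of "{..n}" g, OF finite_atMost dg] by blast
  moreover have "poly3 (n - 1) (\<lambda>x. \<Sum>m\<le>n. D j (g m) x)"
    by (rule poly3_sum) (use g hp_D hp_poly3 in \<open>auto intro!: hp_poly3[OF hp_D] diff_le_mono\<close>)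
  ultimately show ?thesis by simp
qed

lemma poly3_mulx: "poly3 n f \<Longrightarrow> poly3 (Suc n) (\<lambda>x. x$i * f x)"
proof -
  assume "poly3 n f"
  then obtain g where g: "\<forall>m. hp m (g m)" "\<forall>x. f x = (\<Sum>m\<le>n. g m x)" using poly3_decomp by blast
  have "(\<lambda>x. x$i * f x) = (\<lambda>x. \<Sum>m\<le>n. x$i * g m x)" using g by (auto simp: sum_distrib_left)
  moreover have "poly3 (Suc n) (\<lambda>x. \<Sum>m\<le>n. x$i * g m x)"
    by (rule poly3_sum) (use g in \<open>auto intro!: hp_poly3[OF hp_mulx]\<close>)
  ultimately show ?thesis by simp
qed

lemma poly3_mulx_right: "poly3 n f \<Longrightarrow> poly3 (Suc n) (\<lambda>x. f x * x$i)"
  using poly3_mulx[of n f i] by (simp add: mult.commute)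

lemma bl_vecD: "bounded_linear (\<lambda>h::real^3. \<chi> i. \<Sum>j\<in>UNIV. h$j * (G i j :: real))"
proof -
  have "linear (\<lambda>h::real^3. \<chi> i. \<Sum>j\<in>UNIV. h$j * G i j)"
    by (rule linearI) (simp_all add: vec_eq_iff algebra_simps sum.distrib sum_distrib_left)
  then show ?thesis using linear_conv_bounded_linear by blast
qed

lemma vec_has_derivative:
  fixes u :: "real^3 \<Rightarrow> real^3"
  assumes "\<And>i. ((\<lambda>x. u x $ i) has_derivative (\<lambda>h. \<Sum>j\<in>UNIV. h$j * G i j)) (at x)"
  shows "(u has_derivative (\<lambda>h. \<chi> i. \<Sum>j\<in>UNIV. h$j * G i j)) (at x)"
proof -
  have "\<forall>b\<in>Basis. ((\<lambda>x. u x \<bullet> b) has_derivative (\<lambda>h. (\<chi> i. \<Sum>j\<in>UNIV. h$j * G i j) \<bullet> b)) (at x)"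
  proof
    fix b :: "real^3" assume "b \<in> Basis"
    then obtain k where b: "b = axis k 1" unfolding Basis_vec_def by auto
    show "((\<lambda>x. u x \<bullet> b) has_derivative (\<lambda>h. (\<chi> i. \<Sum>j\<in>UNIV. h$j * G i j) \<bullet> b)) (at x)"
      unfolding b inner_axis using assms[of k] by simp
  qed
  then show ?thesis using has_derivative_componentwise_within[of u _ x UNIV] by simp
qed

lemma grad_eq:
  fixes u :: "real^3 \<Rightarrow> real^3"
  assumes "\<And>i. Df (\<lambda>x. u x $ i)"
  shows "(u has_derivative (\<lambda>h. \<chi> i. \<Sum>j\<in>UNIV. h$j * D j (\<lambda>y. u y $ i) x)) (at x)"
    "grad u x = (\<chi> i j. D j (\<lambda>y. u y $ i) x)"
proof -
  show d: "(u has_derivative (\<lambda>h. \<chi> i. \<Sum>j\<in>UNIV. h$j * D j (\<lambda>y. u y $ i) x)) (at x)"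
    by (rule vec_has_derivative) (use assms Df_D in blast)
  show "grad u x = (\<chi> i j. D j (\<lambda>y. u y $ i) x)"
    unfolding grad_def jacobian_def frechet_derivative_at[OF d, symmetric] matrix_def
    by (simp add: sum_axis)
qed

lemma grad_on_dom:
  fixes u :: "real^3 \<Rightarrow> real^3"
  assumes "\<And>i. Df (\<lambda>x. u x $ i)" "open \<Omega>" "x \<in> \<Omega>"
  shows "grad (on_dom \<Omega> u) x = grad u x"
proof -
  note d = grad_eq(1)[OF assms(1), of x]
  have d2: "(on_dom \<Omega> u has_derivative (\<lambda>h. \<chi> i. \<Sum>j\<in>UNIV. h$j * D j (\<lambda>y. u y $ i) x)) (at x)"
    by (rule has_derivative_transform_within_open[OF d assms(2,3)]) (simp add: on_dom_def)
  show ?thesis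
    unfolding grad_def jacobian_def frechet_derivative_at[OF d, symmetric] frechet_derivative_at[OF d2, symmetric] ..
qed

definition crs :: "(3 \<Rightarrow> real) \<Rightarrow> real^3 \<Rightarrow> 3 \<Rightarrow> real" where
  "crs w x i = (if i = 1 then w 2 * x$3 - w 3 * x$2 else if i = 2 then w 3 * x$1 - w 1 * x$3
                else w 1 * x$2 - w 2 * x$1)"

definition curl :: "(3 \<Rightarrow> real^3 \<Rightarrow> real) \<Rightarrow> 3 \<Rightarrow> real^3 \<Rightarrow> real" where
  "curl v i x = (if i = 1 then D 2 (v 3) x - D 3 (v 2) x else if i = 2 then D 3 (v 1) x - D 1 (v 3) x
                else D 1 (v 2) x - D 2 (v 1) x)"

lemma crs_add: "crs (\<lambda>l. f l + g l) x j = crs f x j + crs g x j"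
  by (simp add: crs_def algebra_simps)
lemma crs_scale: "crs (\<lambda>l. c * f l) x j = c * crs f x j"
  by (simp add: crs_def algebra_simps)
lemma crs_xx: "crs (\<lambda>l. c * x$l) x j = 0"
  by (simp add: crs_def algebra_simps)

lemma hp_curl: "(\<And>l. hp n (v l)) \<Longrightarrow> hp (n - 1) (curl v i)"
proof -
  assume h: "\<And>l. hp n (v l)"
  consider "i = 1" | "i = 2" | "i = 3" using exhaust_3 by blast
  then show ?thesis
  proof cases
    case 1
    have e: "curl v i = (\<lambda>x. D 2 (v 3) x - D 3 (v 2) x)" using 1 by (simp add: fun_eq_iff curl_def)
    show ?thesis by (simp only: e) (intro hp_diff; simp add: hp_D' h)
  next
    case 2
    have e: "curl v i = (\<lambda>x. D 3 (v 1) x - D 1 (v 3) x)" using 2 by (simp add: fun_eq_iff curl_def)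
    show ?thesis by (simp only: e) (intro hp_diff; simp add: hp_D' h)
  next
    case 3
    have e: "curl v i = (\<lambda>x. D 1 (v 2) x - D 2 (v 1) x)" using 3 by (simp add: fun_eq_iff curl_def)
    show ?thesis by (simp only: e) (intro hp_diff; simp add: hp_D' h)
  qed
qed

lemma curl0: "(\<And>l. hp 0 (v l)) \<Longrightarrow> curl v i x = 0"
  unfolding curl_def by (simp add: hp_D0)

lemma D_sum_mulx:
  assumes "\<And>l. Df (v l)"
  shows "D j (\<lambda>x. \<Sum>l\<in>UNIV. v l x * x$l) x = v j x + (\<Sum>l\<in>UNIV. x$l * D j (v l) x)"
proof -
  have d: "\<And>l. Df (\<lambda>x. v l x * x$l)" using Df_mul(1)[OF assms Df_coord(1)] by blast
  have "D j (\<lambda>x. \<Sum>l\<in>UNIV. v l x * x$l) x = (\<Sum>l\<in>UNIV. D j (\<lambda>x. v l x * x$l) x)"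
    using Df_sum[of UNIV "\<lambda>l x. v l x * x$l"] d by simp
  also have "\<dots> = (\<Sum>l\<in>UNIV. (if l = j then v j x else 0) + x$l * D j (v l) x)"
    by (rule sum.cong[OF refl]) (auto simp: Df_mul(2)[OF assms Df_coord(1)] Df_coord(2))
  also have "\<dots> = v j x + (\<Sum>l\<in>UNIV. x$l * D j (v l) x)"
    by (simp add: sum.distrib)
  finally show ?thesis .
qed

lemma koszul:
  assumes hv: "\<And>l. hp n (v l)" and z: "\<And>x. (\<Sum>l\<in>UNIV. v l x * x$l) = 0"
  shows "crs (\<lambda>l. curl v l x) x i = real (Suc n) * v i x"
proof -
  have g0: "(\<lambda>x. \<Sum>l\<in>UNIV. v l x * x$l) = (\<lambda>x. 0)" using z by auto
  have G: "v j x + (\<Sum>l\<in>UNIV. x$l * D j (v l) x) = 0" for j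
    using D_sum_mulx[where v=v and j=j and x=x] hv hp_Df g0 Df_const(2)[where c=0 and j=j and x=x] by auto
  have G1: "v 1 x + x$1 * D 1 (v 1) x + x$2 * D 1 (v 2) x + x$3 * D 1 (v 3) x = 0"
    using G[of 1] by (simp add: sum_3 add.assoc)
  have G2: "v 2 x + x$1 * D 2 (v 1) x + x$2 * D 2 (v 2) x + x$3 * D 2 (v 3) x = 0"
    using G[of 2] by (simp add: sum_3 add.assoc)
  have G3: "v 3 x + x$1 * D 3 (v 1) x + x$2 * D 3 (v 2) x + x$3 * D 3 (v 3) x = 0"
    using G[of 3] by (simp add: sum_3 add.assoc)
  note E1 = hp_euler3[OF hv[of 1], of x] and E2 = hp_euler3[OF hv[of 2], of x]
    and E3 = hp_euler3[OF hv[of 3], of x]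
  consider "i = 1" | "i = 2" | "i = 3" using exhaust_3 by blast
  then show ?thesis
  proof cases
    case 1
    show ?thesis unfolding 1 crs_def curl_def using G1 E1
      by (simp add: algebra_simps; linarith)
  next
    case 2
    show ?thesis unfolding 2 crs_def curl_def using G2 E2
      by (simp add: algebra_simps; linarith)
  next
    case 3
    show ?thesis unfolding 3 crs_def curl_def using G3 E3
      by (simp add: algebra_simps; linarith)
  qed
qed

lemma sum_delta_mul: "(\<Sum>j\<in>UNIV. (if i = j then c else 0) * (y::real^3)$j) = c * y$i"
proof -
  have "\<And>j. (if i = j then c else 0) * y$j = (if i = j then c * y$i else 0)" by simp
  then show ?thesis by simp
qed

lemma HE:
  fixes \<sigma> :: "3 \<Rightarrow> 3 \<Rightarrow> real^3 \<Rightarrow> real"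
  assumes hs: "\<And>i j. hp m (\<sigma> i j)" and tr: "\<And>x. (\<Sum>i\<in>UNIV. \<sigma> i i x) = 0"
  shows "\<exists>\<tau> u. (\<forall>i j. hp (m - 1) (\<tau> i j)) \<and> (\<forall>i j x. \<tau> i j x = \<tau> j i x) \<and> (\<forall>i. hp (Suc m) (u i)) \<and>
     (\<forall>i j x. \<sigma> i j x = crs (\<lambda>l. \<tau> i l x) x j + (D j (u i) x - (if i = j then (\<Sum>l\<in>UNIV. D l (u l) x) / 3 else 0)))"
proof -
  define v where "v = (\<lambda>i x. \<Sum>j\<in>UNIV. \<sigma> i j x * x$j)"
  have hv: "\<And>i. hp (Suc m) (v i)" unfolding v_def by (auto intro!: hp_sum hp_mulx_right hs)
  define dv where "dv = (\<lambda>x. \<Sum>i\<in>UNIV. D i (v i) x)"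
  have hDv: "\<And>i j. hp m (D j (v i))" using hp_D'[OF hv] by simp
  have hdv: "hp m dv" unfolding dv_def by (auto intro!: hp_sum hDv)
  define s where "s = (\<lambda>x. dv x / (2 * real m))"
  have hs': "hp m s" unfolding s_def by (rule hp_divide[OF hdv])
  define c where "c = inverse (real m + 1)"
  define u where "u = (\<lambda>i x. c * (v i x + s x * x$i))"
  have hu: "\<And>i. hp (Suc m) (u i)" unfolding u_def by (intro hp_scale hp_add hv hp_mulx_right hs')
  have Dfv: "\<And>i. Df (v i)" using hv hp_Df by blast
  have Dfs: "Df s" using hs' hp_Df by blast
  have Du: "D j (u i) x = c * (D j (v i) x + (s x * (if j = i then 1 else 0) + D j s x * x$i))" for i j x
  proof -
    have d1: "Df (\<lambda>x. s x * x$i)" by (rule Df_mul(1)[OF Dfs Df_coord(1)])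
    have "D j (u i) x = c * D j (\<lambda>x. v i x + s x * x$i) x"
      unfolding u_def by (rule Df_scale(2)[OF Df_add(1)[OF Dfv d1]])
    also have "D j (\<lambda>x. v i x + s x * x$i) x = D j (v i) x + D j (\<lambda>x. s x * x$i) x"
      by (rule Df_add(2)[OF Dfv d1])
    also have "D j (\<lambda>x. s x * x$i) x = s x * (if j = i then 1 else 0) + D j s x * x$i"
      by (simp add: Df_mul(2)[OF Dfs Df_coord(1)] Df_coord(2))
    finally show ?thesis .
  qed
  have Dv: "D i (v i) x = \<sigma> i i x + (\<Sum>j\<in>UNIV. x$j * D i (\<sigma> i j) x)" for i x
    unfolding v_def using D_sum_mulx[where v="\<sigma> i" and j=i and x=x] hs hp_Df by blast
  have dv0: "dv x = 0" if "m = 0" for x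
  proof -
    have "D i (\<sigma> i j) x = 0" for i j using hp_D0 hs that by blast
    then have "dv x = (\<Sum>i\<in>UNIV. \<sigma> i i x)" unfolding dv_def Dv by simp
    then show ?thesis using tr by simp
  qed
  have Es: "(\<Sum>l\<in>UNIV. x$l * D l s x) = real m * s x" for x using hp_euler[OF hs'] .
  have du_eq: "(\<Sum>l\<in>UNIV. D l (u l) x) = 3 * s x" for x
  proof -
    have "(\<Sum>l\<in>UNIV. D l (u l) x) = c * (dv x + 3 * s x + (\<Sum>l\<in>UNIV. x$l * D l s x))"
      unfolding Du dv_def by (simp add: sum_3 algebra_simps)
    also have "\<dots> = 3 * s x"
    proof (cases "m = 0")
      case True then show ?thesis using dv0 Es by (simp add: s_def c_def)
    next
      case False
      then have "dv x = 2 * real m * s x" by (simp add: s_def)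
      moreover have "real m + 1 \<noteq> 0" by simp
      ultimately show ?thesis using Es by (simp add: c_def field_simps)
    qed
    finally show ?thesis .
  qed
  define du where "du = (\<lambda>x. \<Sum>l\<in>UNIV. D l (u l) x)"
  define \<rho> where "\<rho> = (\<lambda>i j x. \<sigma> i j x - (D j (u i) x - (if i = j then du x / 3 else 0)))"
  have hDu: "\<And>i j. hp m (D j (u i))" using hp_D'[OF hu] by simp
  have hdu: "hp m du" unfolding du_def by (auto intro!: hp_sum hDu)
  have h\<rho>: "\<And>i j. hp m (\<rho> i j)" unfolding \<rho>_def by (intro hp_diff hs hDu hp_if hp_divide hdu)
  have Eu: "(\<Sum>j\<in>UNIV. x$j * D j (u i) x) = real (Suc m) * u i x" for i x using hp_euler[OF hu] .
  have \<rho>x: "(\<Sum>j\<in>UNIV. \<rho> i j x * x$j) = 0" for i x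
  proof -
    have e: "\<rho> i j x * x$j = \<sigma> i j x * x$j - x$j * D j (u i) x + (if i = j then du x / 3 else 0) * x$j" for j
      unfolding \<rho>_def by (simp add: algebra_simps)
    have "(\<Sum>j\<in>UNIV. \<rho> i j x * x$j) = (\<Sum>j\<in>UNIV. \<sigma> i j x * x$j) - (\<Sum>j\<in>UNIV. x$j * D j (u i) x)
        + (\<Sum>j\<in>UNIV. (if i = j then du x / 3 else 0) * x$j)"
      unfolding e by (simp add: sum.distrib sum_subtractf)
    also have "\<dots> = v i x - real (Suc m) * u i x + du x / 3 * x$i"
      unfolding Eu sum_delta_mul v_def by simp
    also have "\<dots> = 0"
    proof -
      have "real m + 1 \<noteq> 0" by simp
      then have hc: "real (Suc m) * c = 1" by (simp add: c_def add.commute)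
      have "real (Suc m) * u i x = (real (Suc m) * c) * (v i x + s x * x$i)"
        unfolding u_def by (simp only: mult.assoc)
      also have "\<dots> = v i x + s x * x$i" unfolding hc by simp
      finally have e2: "real (Suc m) * u i x = v i x + s x * x$i" .
      show ?thesis unfolding e2 du_def du_eq by simp
    qed
    finally show ?thesis .
  qed
  have tr\<rho>: "(\<Sum>i\<in>UNIV. \<rho> i i x) = 0" for x
    using tr[of x] by (simp add: \<rho>_def du_def sum_3 add_divide_distrib; linarith)
  define W where "W = (\<lambda>i l x. inverse (real m + 1) * curl (\<rho> i) l x)"
  have hW: "\<And>i l. hp (m - 1) (W i l)" unfolding W_def by (intro hp_scale hp_curl h\<rho>)
  have W\<rho>: "crs (\<lambda>l. W i l x) x j = \<rho> i j x" for i j x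
  proof -
    have "crs (\<lambda>l. curl (\<rho> i) l x) x j = real (Suc m) * \<rho> i j x"
      by (rule koszul) (simp_all add: h\<rho> \<rho>x)
    moreover have "real m + 1 \<noteq> 0" by simp
    ultimately show ?thesis unfolding W_def crs_scale by (simp add: field_simps)
  qed
  define k where "k = (\<lambda>(l::3) x. if l = 1 then W 3 2 x - W 2 3 x else if l = 2 then W 1 3 x - W 3 1 x
      else W 2 1 x - W 1 2 x)"
  have hk: "\<And>l. hp (m - 1) (k l)"
  proof -
    fix l :: 3
    consider "l = 1" | "l = 2" | "l = 3" using exhaust_3 by blast
    then show "hp (m - 1) (k l)" by cases (auto simp: k_def intro!: hp_diff hW[unfolded One_nat_def])
  qed
  have kx: "(\<Sum>l\<in>UNIV. k l x * x$l) = 0" for x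
  proof -
    have "(\<Sum>i\<in>UNIV. crs (\<lambda>l. W i l x) x i) = 0" using tr\<rho>[of x] W\<rho> by simp
    then show ?thesis by (simp add: sum_3 crs_def k_def algebra_simps; linarith)
  qed
  define a where "a = (\<lambda>l x. inverse (real (m - 1) + 1) * curl k l x)"
  have ak: "crs (\<lambda>l. a l x) x j = k j x" for x j
  proof -
    have "crs (\<lambda>l. curl k l x) x j = real (Suc (m - 1)) * k j x"
      by (rule koszul) (simp_all add: hk[unfolded One_nat_def] kx)
    moreover have "real (m - 1) + 1 \<noteq> 0" by simp
    ultimately show ?thesis unfolding a_def crs_scale by (simp add: field_simps)
  qed
  have ha: "hp (m - 1) (\<lambda>x. a i x * x$l)" for i l
  proof (cases "2 \<le> m")
    case True
    have "hp (m - 1 - 1) (a i)" unfolding a_def by (intro hp_scale hp_curl hk)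
    then have "hp (Suc (m - 1 - 1)) (\<lambda>x. a i x * x$l)" by (rule hp_mulx_right)
    moreover have "Suc (m - 1 - 1) = m - 1" using True by arith
    ultimately show ?thesis by simp
  next
    case False
    then have "m - 1 = 0" by arith
    then have "\<And>l. hp 0 (k l)" using hk by metis
    then have "curl k i x = 0" for x using curl0[of k] by blast
    then have "(\<lambda>x. a i x * x$l) = (\<lambda>x. 0)" unfolding a_def by simp
    then show ?thesis by (simp add: hp_zero)
  qed
  define \<tau> where "\<tau> = (\<lambda>i l x. W i l x + a i x * x$l)"
  have h\<tau>: "\<And>i l. hp (m - 1) (\<tau> i l)" unfolding \<tau>_def by (intro hp_add hW ha)
  have sym: "\<tau> i l x = \<tau> l i x" for i l x
  proof -
    have ak1: "a 2 x * x$3 - a 3 x * x$2 = W 3 2 x - W 2 3 x" using ak[of x 1] by (simp add: crs_def k_def)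
    have ak2: "a 3 x * x$1 - a 1 x * x$3 = W 1 3 x - W 3 1 x" using ak[of x 2] by (simp add: crs_def k_def)
    have ak3: "a 1 x * x$2 - a 2 x * x$1 = W 2 1 x - W 1 2 x" using ak[of x 3] by (simp add: crs_def k_def)
    have "i = 1 \<or> i = 2 \<or> i = 3" "l = 1 \<or> l = 2 \<or> l = 3" using exhaust_3 by auto
    then show ?thesis unfolding \<tau>_def using ak1 ak2 ak3
      by (elim disjE; simp add: algebra_simps; linarith)
  qed
  have \<tau>\<rho>: "crs (\<lambda>l. \<tau> i l x) x j = \<rho> i j x" for i j x
    unfolding \<tau>_def crs_add crs_xx W\<rho> by simp
  have fin: "\<sigma> i j x = crs (\<lambda>l. \<tau> i l x) x j + (D j (u i) x - (if i = j then (\<Sum>l\<in>UNIV. D l (u l) x) / 3 else 0))"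
    for i j x
    unfolding \<tau>\<rho> by (simp add: \<rho>_def du_def)
  show ?thesis
    by (rule exI[of _ \<tau>], rule exI[of _ u]) (use h\<tau> sym hu fin in blast)
qed

lemma hom_zero:
  assumes hw: "\<And>m. m \<le> N \<Longrightarrow> hp m (w m)" and r: "r > 0"
    and z: "\<And>x. norm x < r \<Longrightarrow> (\<Sum>m\<le>N. w m x) = 0"
    and mN: "m \<le> N"
  shows "w m x = 0"
proof -
  define p where "p = (\<Sum>j\<le>N. monom (w j x) j)"
  define \<delta> where "\<delta> = r / (norm x + 1)"
  have np: "norm x + 1 > 0" using norm_ge_zero[of x] by linarith
  have \<delta>: "\<delta> > 0" unfolding \<delta>_def using r np by (rule divide_pos_pos)
  have roots: "{0<..<\<delta>} \<subseteq> {t. poly p t = 0}"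
  proof
    fix t assume t: "t \<in> {0<..<\<delta>}"
    then have t0: "t > 0" "t < \<delta>" by auto
    have "norm (t *\<^sub>R x) = t * norm x" using t0 by simp
    also have "\<dots> \<le> t * (norm x + 1)" using t0 by (intro mult_left_mono) auto
    also have "\<dots> < \<delta> * (norm x + 1)" using t0 np by (intro mult_strict_right_mono) auto
    also have "\<dots> = r" unfolding \<delta>_def using np by simp
    finally have "norm (t *\<^sub>R x) < r" .
    then have "(\<Sum>j\<le>N. w j (t *\<^sub>R x)) = 0" by (rule z)
    moreover have "w j (t *\<^sub>R x) = w j x * t ^ j" if "j \<le> N" for j
      using hp_homog[OF hw[OF that]] by simp
    ultimately have "(\<Sum>j\<le>N. w j x * t ^ j) = 0" by simp
    then show "t \<in> {t. poly p t = 0}" unfolding p_def by (simp add: poly_sum poly_monom)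
  qed
  have "p = 0"
  proof (rule ccontr)
    assume "p \<noteq> 0"
    then have "finite {t. poly p t = 0}" by (rule poly_roots_finite)
    then have "finite {0<..<\<delta>}" using roots finite_subset by blast
    then show False using infinite_Ioo[of 0 \<delta>] \<delta> by blast
  qed
  then have "coeff p m = 0" by simp
  moreover have "coeff p m = w m x" unfolding p_def coeff_sum using mN by simp
  ultimately show ?thesis by simp
qed

lemma hp_Dmulx: "hp m f \<Longrightarrow> hp m (\<lambda>x. D j f x * x$i)"
proof (cases m)
  case 0
  assume "hp m f"
  then have "(\<lambda>x. D j f x * x$i) = (\<lambda>x. 0)" using 0 hp_D0 by auto
  then show ?thesis by (simp add: hp_zero)
next
  case (Suc n)
  assume "hp m f"
  then have "hp n (D j f)" using hp_D' Suc by fastforce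
  then show ?thesis using hp_mulx_right[of n "D j f" i] Suc by simp
qed

lemma HI:
  assumes hq: "\<And>i. hp m (q i)"
    and w: "\<And>i x. real m * q i x - (\<Sum>l\<in>UNIV. D l (q l) x) / 3 * x$i = 0"
  shows "D j (q i) x - (if i = j then (\<Sum>l\<in>UNIV. D l (q l) x) / 3 else 0) = 0"
proof (cases "m = 0")
  case True
  then show ?thesis using hq hp_D0 by simp
next
  case False
  define d where "d = (\<lambda>x. \<Sum>l\<in>UNIV. D l (q l) x)"
  define s where "s = (\<lambda>x. d x / (3 * real m))"
  have hd: "hp (m - 1) d" unfolding d_def by (intro hp_sum) (auto intro: hp_D' hq)
  have hs: "hp (m - 1) s" unfolding s_def by (rule hp_divide[OF hd])
  have qe: "q i = (\<lambda>x. s x * x$i)" for i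
  proof
    fix x
    have "real m * q i x = d x / 3 * x$i" using w[of i x] unfolding d_def by simp
    then show "q i x = s x * x$i" unfolding s_def using False by (simp add: field_simps)
  qed
  have Dfs: "Df s" using hs hp_Df by blast
  have Dq: "D j (q i) x = s x * (if j = i then 1 else 0) + D j s x * x$i" for i j x
    unfolding qe by (simp add: Df_mul(2)[OF Dfs Df_coord(1)] Df_coord(2))
  have Es: "(\<Sum>l\<in>UNIV. x$l * D l s x) = real (m - 1) * s x" for x using hp_euler[OF hs] .
  have dd: "d x = 3 * s x + real (m - 1) * s x" for x
    unfolding d_def Dq Es[symmetric] by (simp add: sum_3 algebra_simps)
  have dd2: "d x = 3 * real m * s x" for x unfolding s_def using False by simp
  have Ds0: "D l s x = 0" for l x
  proof (cases "m = 1")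
    case True
    then show ?thesis using hs hp_D0 by simp
  next
    case m1: False
    have "s y = 0" for y
    proof -
      have "3 * s y + real (m - 1) * s y = 3 * real m * s y" using dd[of y] dd2[of y] by simp
      then have "(2 * real m - 2) * s y = 0" using False by (simp add: of_nat_diff algebra_simps)
      moreover have "2 * real m - 2 \<noteq> 0" using False m1 by simp
      ultimately show ?thesis by simp
    qed
    then have "s = (\<lambda>y. 0)" by auto
    then show ?thesis using Df_const(2)[where c=0] by simp
  qed
  have "d x = 3 * s x" unfolding d_def Dq Ds0 by (simp add: sum_3)
  then show ?thesis unfolding Dq Ds0 d_def[symmetric] by simp
qed

lemma cross3_crs: "cross3 a x $ j = crs (\<lambda>l. a$l) x j"
proof -
  have "j = 1 \<or> j = 2 \<or> j = 3" using exhaust_3 by auto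
  then show ?thesis by (auto simp: crs_def cross_components algebra_simps)
qed

lemma crs_sum: "crs (\<lambda>l. \<Sum>m\<in>A. f m l) x j = (\<Sum>m\<in>A. crs (f m) x j)"
  by (simp add: crs_def sum_subtractf sum_distrib_right)

lemma dev_nth: "dev A $ i $ j = A $ i $ j - (if i = j then trace A / 3 else 0)"
  by (simp add: dev_def mat_def)

lemma poly3_divide: "poly3 n f \<Longrightarrow> poly3 n (\<lambda>x. f x / c)"
  using poly3_scale[of n f "1/c"] by simp

lemma poly3_if: "poly3 n f \<Longrightarrow> poly3 n (\<lambda>x. if P then f x else 0)"
  by (cases P) (simp_all add: poly3_zero)

lemma mpoly_decomp:
  assumes "mpoly3 n p"
  obtains G where "\<And>i j m. hp m (G i j m)" "\<And>i j x. p x $ i $ j = (\<Sum>m\<le>n. G i j m x)"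
proof -
  have h: "\<forall>i. \<forall>j. \<exists>g. (\<forall>m. hp m (g m)) \<and> (\<forall>x. p x $ i $ j = (\<Sum>m\<le>n. g m x))"
    using assms poly3_decomp unfolding mpoly3_def by blast
  have "\<forall>i. \<exists>Gi. \<forall>j. (\<forall>m. hp m (Gi j m)) \<and> (\<forall>x. p x $ i $ j = (\<Sum>m\<le>n. Gi j m x))"
  proof
    fix i show "\<exists>Gi. \<forall>j. (\<forall>m. hp m (Gi j m)) \<and> (\<forall>x. p x $ i $ j = (\<Sum>m\<le>n. Gi j m x))"
      by (rule choice) (use h in blast)
  qed
  from choice[OF this] obtain G where "\<forall>i j. (\<forall>m. hp m (G i j m)) \<and> (\<forall>x. p x $ i $ j = (\<Sum>m\<le>n. G i j m x))"
    by blast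
  then show ?thesis using that by blast
qed

lemma vpoly_decomp:
  assumes "vpoly3 n q"
  obtains Q where "\<And>i m. hp m (Q m i)" "\<And>i x. q x $ i = (\<Sum>m\<le>n. Q m i x)"
proof -
  have h: "\<forall>i. \<exists>g. (\<forall>m. hp m (g m)) \<and> (\<forall>x. q x $ i = (\<Sum>m\<le>n. g m x))"
    using assms poly3_decomp unfolding vpoly3_def by blast
  from choice[OF h] obtain G where "\<forall>i. (\<forall>m. hp m (G i m)) \<and> (\<forall>x. q x $ i = (\<Sum>m\<le>n. G i m x))"
    by blast
  then show ?thesis using that[of "\<lambda>m i. G i m"] by blast
qed

lemma cross_formula: "cross_x (on_dom \<Omega> p) x = (if x \<in> \<Omega> then (\<chi> i j. crs (\<lambda>l. p x $ i $ l) x j) else 0)"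
  by (auto simp: cross_x_def on_dom_def vec_eq_iff cross3_crs crs_def)

lemma dev_formula:
  assumes Dfq: "\<And>i. Df (\<lambda>x. q x $ i)" and op: "open \<Omega>"
  shows "dev_grad_on \<Omega> (on_dom \<Omega> q) x = (if x \<in> \<Omega> then (\<chi> i j. D j (\<lambda>y. q y $ i) x
      - (if i = j then (\<Sum>l\<in>UNIV. D l (\<lambda>y. q y $ l) x) / 3 else 0)) else 0)"
proof (cases "x \<in> \<Omega>")
  case True
  have "dev_grad_on \<Omega> (on_dom \<Omega> q) x = dev (grad (on_dom \<Omega> q) x)"
    unfolding dev_grad_on_def on_dom_def[of \<Omega> "\<lambda>x. dev (grad (on_dom \<Omega> q) x)"] using True by simp
  also have "\<dots> = dev (grad q x)" using grad_on_dom[OF Dfq op True] by simp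
  also have "\<dots> = (\<chi> i j. D j (\<lambda>y. q y $ i) x
      - (if i = j then (\<Sum>l\<in>UNIV. D l (\<lambda>y. q y $ l) x) / 3 else 0))"
    unfolding grad_eq(2)[OF Dfq] by (simp add: vec_eq_iff dev_nth trace_def)
  finally show ?thesis using True by simp
next
  case False
  then show ?thesis unfolding dev_grad_on_def on_dom_def[of \<Omega> "\<lambda>x. dev (grad (on_dom \<Omega> q) x)"] by simp
qed

lemma symm_nth: "A \<in> symm_mats \<Longrightarrow> A $ i $ j = A $ j $ i"
  unfolding symm_mats_def transpose_def by (auto simp: vec_eq_iff)

lemma zero_in1: "(\<lambda>x. 0) \<in> cross_x ` PM \<Omega> k symm_mats"
proof -
  have "on_dom \<Omega> (\<lambda>x. 0) \<in> PM \<Omega> k symm_mats"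
    unfolding PM_def mpoly3_def symm_mats_def by (auto simp: poly3_zero transpose_def vec_eq_iff)
  moreover have "cross_x (on_dom \<Omega> (\<lambda>x. 0)) = (\<lambda>x. 0)"
    by (auto simp: cross_formula vec_eq_iff crs_def)
  ultimately show ?thesis by (metis image_eqI)
qed

lemma zero_in2: assumes "open \<Omega>" shows "(\<lambda>x. 0) \<in> dev_grad_on \<Omega> ` PV \<Omega> n"
proof -
  have "on_dom \<Omega> (\<lambda>x. 0) \<in> PV \<Omega> n"
    unfolding PV_def vpoly3_def by (auto simp: poly3_zero)
  moreover have "dev_grad_on \<Omega> (on_dom \<Omega> (\<lambda>x. 0)) = (\<lambda>x. 0)"
  proof
    fix x
    have d: "\<And>i. Df (\<lambda>x. (0::real^3) $ i)" using Df_const(1)[where c=0] by simp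
    show "dev_grad_on \<Omega> (on_dom \<Omega> (\<lambda>x. 0)) x = 0"
      unfolding dev_formula[OF d assms] using Df_const(2)[where c=0] by (simp add: vec_eq_iff)
  qed
  ultimately show ?thesis by (metis image_eqI)
qed

lemma crs_poly3:
  assumes "\<And>l. poly3 n (\<lambda>x. w x l)"
  shows "poly3 (Suc n) (\<lambda>x. crs (\<lambda>l. w x l) x j)"
proof -
  have "j = 1 \<or> j = 2 \<or> j = 3" using exhaust_3 by auto
  then show ?thesis
    by (elim disjE) (simp_all add: crs_def poly3_diff poly3_mulx_right assms)
qed

lemma sum_part:
  assumes op: "open \<Omega>" and a: "a \<in> cross_x ` PM \<Omega> k symm_mats" and b: "b \<in> dev_grad_on \<Omega> ` PV \<Omega> (k+2)"
  shows "(\<lambda>x. a x + b x) \<in> PM \<Omega> (k+1) tracefree_mats"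
proof -
  from a obtain p where ap: "a = cross_x (on_dom \<Omega> p)" "mpoly3 k p" "\<forall>x\<in>\<Omega>. p x \<in> symm_mats"
    unfolding PM_def by blast
  from b obtain q where bq: "b = dev_grad_on \<Omega> (on_dom \<Omega> q)" "vpoly3 (k+2) q" unfolding PV_def by blast
  have pq: "\<And>i. poly3 (k+2) (\<lambda>x. q x $ i)" using bq(2) vpoly3_def by blast
  have Dfq: "\<And>i. Df (\<lambda>x. q x $ i)" using pq poly3_Df by blast
  define r where "r = (\<lambda>x. (\<chi> i j. crs (\<lambda>l. p x $ i $ l) x j + (D j (\<lambda>y. q y $ i) x
      - (if i = j then (\<Sum>l\<in>UNIV. D l (\<lambda>y. q y $ l) x) / 3 else 0))))"
  have "(\<lambda>x. a x + b x) = on_dom \<Omega> r"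
    unfolding ap(1) bq(1) cross_formula dev_formula[OF Dfq op]
    by (auto simp: on_dom_def r_def vec_eq_iff)
  moreover have "mpoly3 (k+1) r"
    unfolding mpoly3_def
  proof (intro allI)
    fix i j
    have p1: "poly3 (Suc k) (\<lambda>x. crs (\<lambda>l. p x $ i $ l) x j)"
      by (rule crs_poly3) (use ap(2) in \<open>simp add: mpoly3_def\<close>)
    have p2: "poly3 (k+1) (D j (\<lambda>y. q y $ i))" using poly3_D[OF pq] by simp
    have p3: "poly3 (k+1) (\<lambda>x. if i = j then (\<Sum>l\<in>UNIV. D l (\<lambda>y. q y $ l) x) / 3 else 0)"
      by (intro poly3_if poly3_divide poly3_sum) (use poly3_D[OF pq] in auto)
    have "poly3 (k+1) (\<lambda>x. crs (\<lambda>l. p x $ i $ l) x j + (D j (\<lambda>y. q y $ i) x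
      - (if i = j then (\<Sum>l\<in>UNIV. D l (\<lambda>y. q y $ l) x) / 3 else 0)))"
      using p1 p2 p3 by (simp add: poly3_add poly3_diff)
    then show "poly3 (k+1) (\<lambda>x. r x $ i $ j)" unfolding r_def by simp
  qed
  moreover have "\<forall>x\<in>\<Omega>. r x \<in> tracefree_mats"
  proof
    fix x assume "x \<in> \<Omega>"
    then have s: "\<And>i j. p x $ i $ j = p x $ j $ i" using ap(3) symm_nth by blast
    have "trace (r x) = 0"
      unfolding r_def trace_def using s[of 1 2] s[of 1 3] s[of 2 3]
      by (simp add: sum_3 crs_def algebra_simps add_divide_distrib)
    then show "r x \<in> tracefree_mats" unfolding tracefree_mats_def by simp
  qed
  ultimately show ?thesis unfolding PM_def by blast
qed

lemma exist_part:
  assumes op: "open \<Omega>" and f: "f \<in> PM \<Omega> (k+1) tracefree_mats"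
  shows "\<exists>a b. f = (\<lambda>x. a x + b x) \<and> a \<in> cross_x ` PM \<Omega> k symm_mats \<and> b \<in> dev_grad_on \<Omega> ` PV \<Omega> (k+2)"
proof -
  from f obtain p where fp: "f = on_dom \<Omega> p" and mp: "mpoly3 (k+1) p"
    and trp: "\<forall>x\<in>\<Omega>. p x \<in> tracefree_mats" unfolding PM_def by blast
  obtain G where G: "\<And>i j m. hp m (G i j m)" "\<And>i j x. p x $ i $ j = (\<Sum>m\<le>k+1. G i j m x)"
    using mpoly_decomp[OF mp] by blast
  define \<sigma> where "\<sigma> = (\<lambda>m i j x. G i j m x - (if i = j then (\<Sum>l\<in>UNIV. G l l m x) / 3 else 0))"
  have h\<sigma>: "hp m (\<sigma> m i j)" for m i j
    unfolding \<sigma>_def by (auto intro!: hp_diff hp_if hp_divide hp_sum G)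
  have tr\<sigma>: "(\<Sum>i\<in>UNIV. \<sigma> m i i x) = 0" for m x
    unfolding \<sigma>_def by (simp add: sum_3 add_divide_distrib)
  have "\<exists>\<tau> u. (\<forall>i j. hp (m - 1) (\<tau> i j)) \<and> (\<forall>i j x. \<tau> i j x = \<tau> j i x) \<and> (\<forall>i. hp (Suc m) (u i)) \<and>
     (\<forall>i j x. \<sigma> m i j x = crs (\<lambda>l. \<tau> i l x) x j + (D j (u i) x - (if i = j then (\<Sum>l\<in>UNIV. D l (u l) x) / 3 else 0)))"
    for m by (rule HE) (use h\<sigma> tr\<sigma> in auto)
  then have "\<forall>m. \<exists>\<tau> u. (\<forall>i j. hp (m - 1) (\<tau> i j)) \<and> (\<forall>i j x. \<tau> i j x = \<tau> j i x) \<and> (\<forall>i. hp (Suc m) (u i)) \<and>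
     (\<forall>i j x. \<sigma> m i j x = crs (\<lambda>l. \<tau> i l x) x j + (D j (u i) x - (if i = j then (\<Sum>l\<in>UNIV. D l (u l) x) / 3 else 0)))"
    by blast
  from choice[OF this] obtain T where "\<forall>m. \<exists>u. (\<forall>i j. hp (m - 1) (T m i j)) \<and> (\<forall>i j x. T m i j x = T m j i x) \<and> (\<forall>i. hp (Suc m) (u i)) \<and>
     (\<forall>i j x. \<sigma> m i j x = crs (\<lambda>l. T m i l x) x j + (D j (u i) x - (if i = j then (\<Sum>l\<in>UNIV. D l (u l) x) / 3 else 0)))"
    by blast
  from choice[OF this] obtain U where TU: "\<forall>m. (\<forall>i j. hp (m - 1) (T m i j)) \<and> (\<forall>i j x. T m i j x = T m j i x) \<and> (\<forall>i. hp (Suc m) (U m i)) \<and>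
     (\<forall>i j x. \<sigma> m i j x = crs (\<lambda>l. T m i l x) x j + (D j (U m i) x - (if i = j then (\<Sum>l\<in>UNIV. D l (U m l) x) / 3 else 0)))"
    by blast
  have hT: "\<And>m i j. hp (m - 1) (T m i j)" and sT: "\<And>m i j x. T m i j x = T m j i x"
    and hU: "\<And>m i. hp (Suc m) (U m i)"
    and eT: "\<And>m i j x. \<sigma> m i j x = crs (\<lambda>l. T m i l x) x j + (D j (U m i) x - (if i = j then (\<Sum>l\<in>UNIV. D l (U m l) x) / 3 else 0))"
    using TU by blast+
  define \<tau> where "\<tau> = (\<lambda>x. \<chi> i l. \<Sum>m\<le>k+1. T m i l x)"
  define u where "u = (\<lambda>x. \<chi> i. \<Sum>m\<le>k+1. U m i x)"
  have m\<tau>: "mpoly3 k \<tau>" unfolding mpoly3_def \<tau>_def vec_lambda_beta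
    by (intro allI poly3_sum finite_atMost; rule hp_poly3[OF hT]; simp)
  have s\<tau>: "\<forall>x\<in>\<Omega>. \<tau> x \<in> symm_mats"
    unfolding symm_mats_def \<tau>_def transpose_def by (auto simp: vec_eq_iff sT)
  have vu: "vpoly3 (k+2) u" unfolding vpoly3_def u_def vec_lambda_beta
    by (intro allI poly3_sum finite_atMost; rule hp_poly3[OF hU]; simp)
  have ue: "(\<lambda>y. u y $ i) = (\<lambda>y. \<Sum>m\<le>k+1. U m i y)" for i unfolding u_def by simp
  have DfU: "\<And>m i. Df (U m i)" using hU hp_Df by blast
  have Dfu: "Df (\<lambda>x. u x $ i)" for i unfolding ue using Df_sum[of "{..k+1}" "\<lambda>m. U m i"] DfU by simp
  have Du: "D j (\<lambda>y. u y $ i) x = (\<Sum>m\<le>k+1. D j (U m i) x)" for i j x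
    unfolding ue using Df_sum[of "{..k+1}" "\<lambda>m. U m i"] DfU by simp
  have "f = (\<lambda>x. cross_x (on_dom \<Omega> \<tau>) x + dev_grad_on \<Omega> (on_dom \<Omega> u) x)"
  proof
    fix x
    show "f x = cross_x (on_dom \<Omega> \<tau>) x + dev_grad_on \<Omega> (on_dom \<Omega> u) x"
    proof (cases "x \<in> \<Omega>")
      case False
      then show ?thesis unfolding fp cross_formula dev_formula[OF Dfu op] by (simp add: on_dom_def)
    next
      case True
      have tr0: "(\<Sum>l\<in>UNIV. p x $ l $ l) = 0" using trp True unfolding tracefree_mats_def trace_def by blast
      have "p x $ i $ j = crs (\<lambda>l. \<tau> x $ i $ l) x j + (D j (\<lambda>y. u y $ i) x
          - (if i = j then (\<Sum>l\<in>UNIV. D l (\<lambda>y. u y $ l) x) / 3 else 0))" for i j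
      proof -
        have "p x $ i $ j = (\<Sum>m\<le>k+1. \<sigma> m i j x)"
        proof -
          have "(\<Sum>m\<le>k+1. \<sigma> m i j x) = p x $ i $ j - (if i = j then (\<Sum>l\<in>UNIV. p x $ l $ l) / 3 else 0)"
            unfolding \<sigma>_def G(2) by (cases "i = j") (simp_all add: sum_subtractf sum_divide_distrib[symmetric] sum.swap[of _ "{..Suc k}" UNIV] del: sum.atMost_Suc)
          then show ?thesis using tr0 by simp
        qed
        also have "\<dots> = (\<Sum>m\<le>k+1. crs (\<lambda>l. T m i l x) x j) + ((\<Sum>m\<le>k+1. D j (U m i) x)
          - (if i = j then (\<Sum>l\<in>UNIV. \<Sum>m\<le>k+1. D l (U m l) x) / 3 else 0))"
          unfolding eT by (cases "i = j") (simp_all add: sum.distrib sum_subtractf sum_divide_distrib[symmetric] sum.swap[of _ "{..Suc k}" UNIV] del: sum.atMost_Suc)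
        also have "\<dots> = crs (\<lambda>l. \<tau> x $ i $ l) x j + (D j (\<lambda>y. u y $ i) x
          - (if i = j then (\<Sum>l\<in>UNIV. D l (\<lambda>y. u y $ l) x) / 3 else 0))"
          unfolding Du \<tau>_def by (simp add: crs_sum del: sum.atMost_Suc)
        finally show ?thesis .
      qed
      then show ?thesis unfolding fp cross_formula dev_formula[OF Dfu op] using True
        by (simp add: on_dom_def vec_eq_iff)
    qed
  qed
  moreover have "on_dom \<Omega> \<tau> \<in> PM \<Omega> k symm_mats" unfolding PM_def using m\<tau> s\<tau> by blast
  moreover have "on_dom \<Omega> u \<in> PV \<Omega> (k+2)" unfolding PV_def using vu by blast
  ultimately show ?thesis by blast
qed

lemma inter_part:
  assumes op: "open \<Omega>" and z: "0 \<in> \<Omega>" and fa: "f \<in> cross_x ` PM \<Omega> k symm_mats"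
    and fb: "f \<in> dev_grad_on \<Omega> ` PV \<Omega> n"
  shows "f = (\<lambda>x. 0)"
proof -
  from fa obtain p where fp: "f = cross_x (on_dom \<Omega> p)" unfolding PM_def by blast
  from fb obtain q where fq: "f = dev_grad_on \<Omega> (on_dom \<Omega> q)" and vq: "vpoly3 n q" unfolding PV_def by blast
  obtain Q where Q: "\<And>i m. hp m (Q m i)" "\<And>i x. q x $ i = (\<Sum>m\<le>n. Q m i x)"
    using vpoly_decomp[OF vq] by blast
  have DfQ: "\<And>m i. Df (Q m i)" using Q(1) hp_Df by blast
  have qe: "(\<lambda>y. q y $ i) = (\<lambda>y. \<Sum>m\<le>n. Q m i y)" for i using Q(2) by simp
  have Dfq: "Df (\<lambda>x. q x $ i)" for i unfolding qe using Df_sum[of "{..n}" "\<lambda>m. Q m i"] DfQ by simp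
  have Dq: "D j (\<lambda>y. q y $ i) x = (\<Sum>m\<le>n. D j (Q m i) x)" for i j x
    unfolding qe using Df_sum[of "{..n}" "\<lambda>m. Q m i"] DfQ by simp
  define M where "M = (\<lambda>i j x. D j (\<lambda>y. q y $ i) x - (if i = j then (\<Sum>l\<in>UNIV. D l (\<lambda>y. q y $ l) x) / 3 else 0))"
  have fM: "f x $ i $ j = M i j x" if "x \<in> \<Omega>" for x i j
    unfolding fq dev_formula[OF Dfq op] M_def using that by simp
  have fc: "f x $ i = cross3 (p x $ i) x" if "x \<in> \<Omega>" for x i
    unfolding fp cross_x_def on_dom_def using that by simp
  have Mx: "(\<Sum>j\<in>UNIV. M i j x * x$j) = 0" if "x \<in> \<Omega>" for x i
  proof -
    have "(\<Sum>j\<in>UNIV. M i j x * x$j) = cross3 (p x $ i) x \<bullet> x"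
      unfolding inner_vec_def using fM[OF that] fc[OF that] by simp
    also have "\<dots> = 0" by (simp add: dot_cross_self)
    finally show ?thesis .
  qed
  define w where "w = (\<lambda>i m x. real m * Q m i x - (\<Sum>l\<in>UNIV. D l (Q m l) x * x$i) / 3)"
  have hw: "hp m (w i m)" for i m
    unfolding w_def by (intro hp_diff hp_scale Q(1) hp_divide hp_sum) (auto intro: hp_Dmulx Q(1))
  have sw: "(\<Sum>m\<le>n. w i m x) = (\<Sum>j\<in>UNIV. M i j x * x$j)" for i x
  proof -
    have "(\<Sum>m\<le>n. w i m x) = (\<Sum>m\<le>n. (\<Sum>j\<in>UNIV. x$j * D j (Q m i) x) - (\<Sum>l\<in>UNIV. D l (Q m l) x * x$i) / 3)"
      unfolding w_def hp_euler[OF Q(1), symmetric] ..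
    also have "\<dots> = (\<Sum>j\<in>UNIV. x$j * (\<Sum>m\<le>n. D j (Q m i) x)) - (\<Sum>l\<in>UNIV. \<Sum>m\<le>n. D l (Q m l) x) / 3 * x$i"
      by (simp add: sum_subtractf sum_divide_distrib[symmetric] sum_distrib_left sum_distrib_right
          sum.swap[of _ "{..n}" UNIV])
    also have "\<dots> = (\<Sum>j\<in>UNIV. M i j x * x$j)"
    proof -
      have "M i j x * x$j = x$j * D j (\<lambda>y. q y $ i) x - (if i = j then (\<Sum>l\<in>UNIV. D l (\<lambda>y. q y $ l) x) / 3 else 0) * x$j" for j
        unfolding M_def by (simp add: algebra_simps)
      then have "(\<Sum>j\<in>UNIV. M i j x * x$j) = (\<Sum>j\<in>UNIV. x$j * D j (\<lambda>y. q y $ i) x) - (\<Sum>l\<in>UNIV. D l (\<lambda>y. q y $ l) x) / 3 * x$i"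
        by (simp add: sum_subtractf sum_delta_mul)
      then show ?thesis unfolding Dq by simp
    qed
    finally show ?thesis .
  qed
  obtain r where r: "r > 0" "ball 0 r \<subseteq> \<Omega>" using op z open_contains_ball by blast
  have w0: "w i m x = 0" if "m \<le> n" for i m x
  proof (rule hom_zero[where N=n and r=r])
    show "\<And>m. m \<le> n \<Longrightarrow> hp m (w i m)" by (rule hw)
    show "0 < r" by (rule r(1))
    show "\<And>x. norm x < r \<Longrightarrow> (\<Sum>m\<le>n. w i m x) = 0"
    proof -
      fix x :: "real^3" assume "norm x < r"
      then have "x \<in> \<Omega>" using r(2) by (auto simp: dist_norm)
      then show "(\<Sum>m\<le>n. w i m x) = 0" unfolding sw by (rule Mx)
    qed
    show "m \<le> n" by (rule that)
  qed
  have HIm: "D j (Q m i) x - (if i = j then (\<Sum>l\<in>UNIV. D l (Q m l) x) / 3 else 0) = 0" if "m \<le> n" for m i j x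
  proof (rule HI[where q="\<lambda>i. Q m i"])
    show "\<And>i. hp m (Q m i)" by (rule Q(1))
    show "\<And>i x. real m * Q m i x - (\<Sum>l\<in>UNIV. D l (Q m l) x) / 3 * x$i = 0"
      using w0[OF that] unfolding w_def by (simp add: sum_distrib_right)
  qed
  have "M i j x = 0" for i j x
  proof -
    have "M i j x = (\<Sum>m\<le>n. D j (Q m i) x - (if i = j then (\<Sum>l\<in>UNIV. D l (Q m l) x) / 3 else 0))"
      unfolding M_def Dq by (cases "i = j") (simp_all add: sum_subtractf sum_divide_distrib[symmetric] sum.swap[of _ "{..n}" UNIV])
    also have "\<dots> = 0" using HIm by simp
    finally show ?thesis .
  qed
  then show ?thesis
  proof -
    assume M0: "\<And>i j x. M i j x = 0"
    show ?thesis
    proof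
      fix x show "f x = 0"
      proof (cases "x \<in> \<Omega>")
        case True then show ?thesis using fM[OF True] M0 by (simp add: vec_eq_iff)
      next
        case False then show ?thesis unfolding fp cross_x_def on_dom_def by (simp add: vec_eq_iff)
      qed
    qed
  qed
qed

theorem lemma3p4:
  fixes \<Omega> :: "(real^3) set" and k :: nat
  assumes "open \<Omega>" and "connected \<Omega>" and "bounded \<Omega>" and "0 \<in> \<Omega>"
  shows "is_direct_sum (PM \<Omega> (k+1) tracefree_mats)
           (cross_x ` PM \<Omega> k symm_mats)
           (dev_grad_on \<Omega> ` PV \<Omega> (k+2))"
  unfolding is_direct_sum_def
proof (intro conjI)
  show "PM \<Omega> (k+1) tracefree_mats = {(\<lambda>x. a x + b x) |a b. a \<in> cross_x ` PM \<Omega> k symm_mats \<and> b \<in> dev_grad_on \<Omega> ` PV \<Omega> (k+2)}"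
  proof
    show "PM \<Omega> (k+1) tracefree_mats \<subseteq> {(\<lambda>x. a x + b x) |a b. a \<in> cross_x ` PM \<Omega> k symm_mats \<and> b \<in> dev_grad_on \<Omega> ` PV \<Omega> (k+2)}"
      using exist_part[OF assms(1)] by blast
    show "{(\<lambda>x. a x + b x) |a b. a \<in> cross_x ` PM \<Omega> k symm_mats \<and> b \<in> dev_grad_on \<Omega> ` PV \<Omega> (k+2)} \<subseteq> PM \<Omega> (k+1) tracefree_mats"
      using sum_part[OF assms(1)] by blast
  qed
  show "cross_x ` PM \<Omega> k symm_mats \<inter> dev_grad_on \<Omega> ` PV \<Omega> (k+2) = {\<lambda>x. 0}"
    using inter_part[OF assms(1) assms(4)] zero_in1 zero_in2[OF assms(1)] by blast
qed

end
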